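(* Let $\mathcal{A}$ be a finite alphabet with $\#\mathcal{A}\ge4$. Every labeled Rauzy class of irreducible pairs on $\mathcal{A}$ contains a good pair or a degenerate$^*$ pair.
   Context: Let $n=\#\mathcal{A}$. A pair is $\mathbf{p}=(p_0,p_1)$ with $p_0,p_1:\mathcal{A}\to\{1,\dots,n\}$ bijections. Irreducible: $p_0^{-1}\{1,\dots,k\}\ne p_1^{-1}\{1,\dots,k\}$ for $1\le k<n$ (the analogous definition applies on any alphabet). Rauzy move of type $\varepsilon$: $\varepsilon\mathbf{p}=(p'_0,p'_1)$, $p'_\varepsilon=p_\varepsilon$, and for $z=p_\varepsilon^{-1}(n)$, $p'_{1-\varepsilon}(b)=p_{1-\varepsilon}(b)$ if $p_{1-\varepsilon}(b)\le p_{1-\varepsilon}(z)$, $=p_{1-\varepsilon}(b)+1$ if $p_{1-\varepsilon}(z)<p_{1-\varepsilon}(b)<n$, $=p_{1-\varepsilon}(z)+1$ if $p_{1-\varepsilon}(b)=n$. The labeled Rauzy class of an irreducible $\mathbf{p}$ is the set of pairs reachable from $\mathbf{p}$ by Rauzy moves. $\mathbf{p}$ is standard if $p_0^{-1}(1)=p_1^{-1}(n)$ and $p_1^{-1}(1)=p_0^{-1}(n)$. For $\mathcal{A}'\subset\mathcal{A}$, the restriction of $\mathbf{p}$ to $\mathcal{A}'$ is the pair $(p'_0,p'_1)$ on $\mathcal{A}'$ with $p'_\varepsilon(b)=\#\{c\in\mathcal{A}':p_\varepsilon(c)\le p_\varepsilon(b)\}$. A standard pair $\mathbf{p}$ is degenerate$^*$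 if some $c\in\mathcal{A}$ has $p_0(c)=p_1(c)=n-1$. A standard pair $\mathbf{p}$ is good if its restriction to $\mathcal{A}\setminus\{p_0^{-1}(1),p_1^{-1}(1)\}$ (i.e. to positions $2,\dots,n-1$) is irreducible. *)

theory Defs
  imports Main
begin

text \<open>A pair on an alphabet A (a finite set) is p = (p0, p1), each a bijection
  A -> {1..#A}. Values outside A are irrelevant.\<close>

type_synonym 'a rpair = "('a \<Rightarrow> nat) \<times> ('a \<Rightarrow> nat)"

definition is_pair :: "'a set \<Rightarrow> 'a rpair \<Rightarrow> bool" where
  "is_pair A p \<longleftrightarrow> bij_betw (fst p) A {1..card A} \<and> bij_betw (snd p) A {1..card A}"

definition comp :: "'a rpair \<Rightarrow> bool \<Rightarrow> ('a \<Rightarrow> nat)" where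
  "comp p e = (if e then snd p else fst p)"

definition irreducible :: "'a set \<Rightarrow> 'a rpair \<Rightarrow> bool" where
  "irreducible A p \<longleftrightarrow>
     (\<forall>k. 1 \<le> k \<and> k < card A \<longrightarrow> {a\<in>A. fst p a \<le> k} \<noteq> {a\<in>A. snd p a \<le> k})"

definition rauzy_move :: "'a set \<Rightarrow> bool \<Rightarrow> 'a rpair \<Rightarrow> 'a rpair" where
  "rauzy_move A e p =
     (let n = card A; pe = comp p e; po = comp p (\<not> e);
          z = (THE z. z \<in> A \<and> pe z = n);
          po' = (\<lambda>b. if po b \<le> po z then po b
                     else if po b < n then po b + 1
                     else po z + 1)
      in if e then (po', pe) else (pe, po'))"

inductive_set rauzy_class :: "'a set \<Rightarrow> 'a rpair \<Rightarrow> 'a rpair set"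
  for A :: "'a set" and p :: "'a rpair" where
  base: "p \<in> rauzy_class A p"
| step: "q \<in> rauzy_class A p \<Longrightarrow> rauzy_move A e q \<in> rauzy_class A p"

definition standard :: "'a set \<Rightarrow> 'a rpair \<Rightarrow> bool" where
  "standard A p \<longleftrightarrow>
     (\<exists>a\<in>A. fst p a = 1 \<and> snd p a = card A) \<and>
     (\<exists>a\<in>A. snd p a = 1 \<and> fst p a = card A)"

definition restrict_pair :: "'a set \<Rightarrow> 'a rpair \<Rightarrow> 'a rpair" where
  "restrict_pair A' p =
     ((\<lambda>b. card {c\<in>A'. fst p c \<le> fst p b}), (\<lambda>b. card {c\<in>A'. snd p c \<le> snd p b}))"

definition degenerate_star :: "'a set \<Rightarrow> 'a rpair \<Rightarrow> bool" where
  "degenerate_star A p \<longleftrightarrow> standard A p \<and>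
     (\<exists>c\<in>A. fst p c = card A - 1 \<and> snd p c = card A - 1)"

definition good :: "'a set \<Rightarrow> 'a rpair \<Rightarrow> bool" where
  "good A p \<longleftrightarrow> standard A p \<and>
     (let A' = {a\<in>A. fst p a \<noteq> 1 \<and> snd p a \<noteq> 1} in irreducible A' (restrict_pair A' p))"

end

theory Submission
  imports Defs
begin


inductive lstep :: "'a list \<times> 'a list \<Rightarrow> 'a list \<times> 'a list \<Rightarrow> bool" where
  t0: "xs \<noteq> [] \<Longrightarrow> last xs = z \<Longrightarrow> lstep (xs, Y1 @ z # Y2 @ [w]) (xs, Y1 @ z # w # Y2)"
| t1: "ys \<noteq> [] \<Longrightarrow> last ys = z \<Longrightarrow> lstep (X1 @ z # X2 @ [w], ys) (X1 @ z # w # X2, ys)"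

lemma lstep_swap: "lstep s t \<Longrightarrow> lstep (prod.swap s) (prod.swap t)"
  by (induction rule: lstep.induct) (auto intro: lstep.intros)

lemma lsteps_swap: "lstep\<^sup>*\<^sup>* s t \<Longrightarrow> lstep\<^sup>*\<^sup>* (prod.swap s) (prod.swap t)"
  by (induction rule: rtranclp_induct) (auto intro: rtranclp.rtrancl_into_rtrancl lstep_swap)

lemma rotate1_snoc: "rotate1 U = V @ [w] \<Longrightarrow> U = w # V"
  by (cases U) auto

lemma rot0_aux:
  assumes "xs \<noteq> []" "last xs = z"
  shows "j \<le> length Y2 \<Longrightarrow> lstep\<^sup>*\<^sup>* (xs, Y1 @ z # Y2) (xs, Y1 @ z # rotate (length Y2 - j) Y2)"
proof (induction j)
  case 0
  then show ?case by simp
next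
  case (Suc j)
  then have IH: "lstep\<^sup>*\<^sup>* (xs, Y1 @ z # Y2) (xs, Y1 @ z # rotate (length Y2 - j) Y2)" by simp
  define k where "k = length Y2 - Suc j"
  have k: "length Y2 - j = Suc k" using Suc.prems k_def by simp
  have ne: "rotate (Suc k) Y2 \<noteq> []" using Suc.prems by (cases Y2) auto
  then obtain V w where Vw: "rotate (Suc k) Y2 = V @ [w]" by (metis rev_exhaust)
  have "rotate k Y2 = w # V" using Vw by (intro rotate1_snoc) simp
  then have "lstep (xs, Y1 @ z # V @ [w]) (xs, Y1 @ z # rotate k Y2)"
    using lstep.t0[OF assms] by simp
  then show ?case using IH k Vw k_def
    by (metis rtranclp.rtrancl_into_rtrancl)
qed

lemma rot0:
  assumes "xs \<noteq> []" "last xs = z" "k \<le> length Y2"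
  shows "lstep\<^sup>*\<^sup>* (xs, Y1 @ z # Y2) (xs, Y1 @ z # rotate k Y2)"
  using rot0_aux[OF assms(1,2), of "length Y2 - k" Y2 Y1] assms(3) by simp

lemma rot1:
  assumes "ys \<noteq> []" "last ys = z" "k \<le> length X2"
  shows "lstep\<^sup>*\<^sup>* (X1 @ z # X2, ys) (X1 @ z # rotate k X2, ys)"
  using lsteps_swap[OF rot0[OF assms, of X1]] by simp



definition lperm :: "'a list \<times> 'a list \<Rightarrow> bool" where
  "lperm s \<longleftrightarrow> distinct (fst s) \<and> distinct (snd s) \<and> set (fst s) = set (snd s)"

definition lirr :: "'a list \<times> 'a list \<Rightarrow> bool" where
  "lirr s \<longleftrightarrow> (\<forall>k. 1 \<le> k \<and> k < length (fst s) \<longrightarrow> set (take k (fst s)) \<noteq> set (take k (snd s)))"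

lemma lperm_len: "lperm s \<Longrightarrow> length (fst s) = length (snd s)"
  unfolding lperm_def by (metis distinct_card)

lemma lstep_perm: "lstep s t \<Longrightarrow> lperm s \<Longrightarrow> lperm t \<and> set (fst t) = set (fst s)"
  by (induction rule: lstep.induct) (auto simp: lperm_def)

lemma lsteps_perm: "lstep\<^sup>*\<^sup>* s t \<Longrightarrow> lperm s \<Longrightarrow> lperm t \<and> set (fst t) = set (fst s)"
  by (induction rule: rtranclp_induct) (auto dest: lstep_perm)

lemma last_notin_take: "distinct xs \<Longrightarrow> k < length xs \<Longrightarrow> last xs \<notin> set (take k xs)"
proof -
  assume d: "distinct xs" and k: "k < length xs"
  then have ne: "xs \<noteq> []" by auto
  have "take k xs = take k (butlast xs @ [last xs])" using ne by simp
  also have "\<dots> = take k (butlast xs)" using k by (simp add: take_append)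
  finally have "set (take k xs) \<subseteq> set (butlast xs)" by (metis set_take_subset)
  moreover have "last xs \<notin> set (butlast xs)" using d ne
    by (metis append_butlast_last_id distinct_append disjoint_iff list.set_intros(1))
  ultimately show ?thesis by blast
qed

lemma lstep_irr: "lstep s t \<Longrightarrow> lperm s \<Longrightarrow> lirr s \<Longrightarrow> lirr t"
proof (induction rule: lstep.induct)
  case (t0 xs z Y1 Y2 w)
  show ?case unfolding lirr_def
  proof (intro allI impI)
    fix k assume k: "1 \<le> k \<and> k < length (fst (xs, Y1 @ z # w # Y2))"
    show "set (take k (fst (xs, Y1 @ z # w # Y2))) \<noteq> set (take k (snd (xs, Y1 @ z # w # Y2)))"
    proof (cases "k \<le> length Y1")
      case True
      then have "take k (Y1 @ z # w # Y2) = take k (Y1 @ z # Y2 @ [w])" by simp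
      then show ?thesis using t0.prems k unfolding lirr_def by auto
    next
      case False
      then have "z \<in> set (take k (Y1 @ z # w # Y2))"
        by (simp add: take_append) (metis Suc_diff_Suc not_le take_Suc_Cons list.set_intros(1))
      moreover have "z \<notin> set (take k xs)" using last_notin_take[of xs k] t0 k
        unfolding lperm_def by auto
      ultimately show ?thesis by auto
    qed
  qed
next
  case (t1 ys z X1 X2 w)
  show ?case unfolding lirr_def
  proof (intro allI impI)
    fix k assume k: "1 \<le> k \<and> k < length (fst (X1 @ z # w # X2, ys))"
    show "set (take k (fst (X1 @ z # w # X2, ys))) \<noteq> set (take k (snd (X1 @ z # w # X2, ys)))"
    proof (cases "k \<le> length X1")
      case True
      then have "take k (X1 @ z # w # X2) = take k (X1 @ z # X2 @ [w])" by simp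
      then show ?thesis using t1.prems k unfolding lirr_def by auto
    next
      case False
      then have "z \<in> set (take k (X1 @ z # w # X2))"
        by (simp add: take_append) (metis Suc_diff_Suc not_le take_Suc_Cons list.set_intros(1))
      moreover have "k < length ys" using t1.prems k lperm_len[of "(X1 @ z # X2 @ [w], ys)"] by simp
      moreover have "z \<notin> set (take k ys)" using last_notin_take[of ys k] t1 calculation(2)
        unfolding lperm_def by auto
      ultimately show ?thesis by auto
    qed
  qed
qed

lemma lsteps_irr: "lstep\<^sup>*\<^sup>* s t \<Longrightarrow> lperm s \<Longrightarrow> lirr s \<Longrightarrow> lirr t"
  by (induction rule: rtranclp_induct) (auto dest: lsteps_perm lstep_irr)



definition lstd :: "'a list \<times> 'a list \<Rightarrow> bool" where
  "lstd s \<longleftrightarrow> (\<exists>a b T B. fst s = a # T @ [b] \<and> snd s = b # B @ [a])"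

lemma set_butlast_distinct: "distinct xs \<Longrightarrow> xs \<noteq> [] \<Longrightarrow> set (butlast xs) = set xs - {last xs}"
  by (metis Diff_insert_absorb append_butlast_last_id distinct_butlast empty_set insert_is_Un
      list.simps(15) set_append Un_commute distinct_append disjoint_insert(1))

lemma step_down:
  assumes r: "lstep\<^sup>*\<^sup>* s0 (xs, Y1 @ z # Y2)" and zl: "z = last xs" and xne: "xs \<noteq> []"
    and p0: "lperm s0" and i0: "lirr s0" and Y1ne: "Y1 \<noteq> []"
  shows "\<exists>xs' Y1' Y2'. lstep\<^sup>*\<^sup>* s0 (xs', Y1' @ last xs' # Y2') \<and> length Y1' < length Y1"
proof -
  define ys where "ys = Y1 @ z # Y2"
  have ps: "lperm (xs, ys)" using lsteps_perm[OF r p0] ys_def by simp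
  have irs: "lirr (xs, ys)" using lsteps_irr[OF r p0 i0] ys_def by simp
  have dx: "distinct xs" and dy: "distinct ys" and sxy: "set xs = set ys" using ps unfolding lperm_def by auto
  have len: "length xs = length ys" using lperm_len[OF ps] by simp
  define p where "p = length Y1"
  have p1: "1 \<le> p" using Y1ne p_def by (cases Y1) auto
  have zY1: "z \<notin> set Y1" using dy ys_def by simp
  have Y2ne: "Y2 \<noteq> []"
  proof
    assume Y2: "Y2 = []"
    then have "ys = Y1 @ [z]" using ys_def by simp
    then have lp: "length xs = Suc p" using len p_def by simp
    have "take p xs = butlast xs" using lp by (simp add: butlast_conv_take)
    then have "set (take p xs) = set xs - {z}" using set_butlast_distinct[OF dx xne] zl by simp
    moreover have "set Y1 = set ys - {z}" using \<open>ys = Y1 @ [z]\<close> zY1 by auto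
    ultimately have e1: "set (take p xs) = set Y1" using sxy by blast
    have "take p ys = Y1" using \<open>ys = Y1 @ [z]\<close> p_def by simp
    then have "set (take p xs) = set (take p ys)" using e1 by simp
    then show False using irs p1 lp unfolding lirr_def by auto
  qed
  have pn: "p < length xs" using len ys_def p_def Y2ne by simp
  have tY: "take p ys = Y1" using ys_def p_def by simp
  have neq: "set (take p xs) \<noteq> set Y1" using irs p1 pn tY unfolding lirr_def by auto
  have c1: "card (set (take p xs)) = p" using dx pn by (simp add: distinct_card)
  have c2: "card (set Y1) = p" using dy ys_def p_def by (simp add: distinct_card)
  obtain g where g: "g \<in> set Y1" "g \<notin> set (take p xs)"
    using neq c1 c2 card_subset_eq[of "set (take p xs)" "set Y1"] by (metis finite_set subsetI)
  obtain bb where bb: "bb \<in> set (take p xs)" "bb \<notin> set Y1"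
    using neq c1 c2 card_subset_eq[of "set Y1" "set (take p xs)"] by (metis finite_set subsetI)
  have bbz: "bb \<noteq> z" using last_notin_take[OF dx pn] bb zl by auto
  have "bb \<in> set ys" using bb sxy by (metis in_set_takeD)
  then have "bb \<in> set Y2" using bb bbz ys_def by auto
  then obtain U1 U2 where U: "Y2 = U1 @ bb # U2" by (metis split_list)
  have "lstep\<^sup>*\<^sup>* (xs, Y1 @ z # Y2) (xs, Y1 @ z # rotate (length (U1 @ [bb])) Y2)"
    by (rule rot0) (use xne zl U in auto)
  moreover have "rotate (length (U1 @ [bb])) Y2 = U2 @ U1 @ [bb]"
    using U rotate_append[of "U1 @ [bb]" U2] by simp
  ultimately have r1: "lstep\<^sup>*\<^sup>* s0 (xs, Y1 @ z # U2 @ U1 @ [bb])" using r by simp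
  define ys1 where "ys1 = Y1 @ z # U2 @ U1 @ [bb]"
  obtain X1 X2 where X: "xs = X1 @ bb # X2" using bb by (metis in_set_takeD split_list)
  have X2ne: "X2 \<noteq> []" using X zl bbz by auto
  have lX2: "last X2 = z" using X zl X2ne by simp
  obtain X2' where X2': "X2 = X2' @ [z]" using X2ne lX2 by (metis append_butlast_last_id)
  have X1p: "length X1 < p"
  proof (rule ccontr)
    assume "\<not> length X1 < p"
    then have "take p xs = take p X1" using X by simp
    then have "bb \<in> set X1" using bb by (metis in_set_takeD)
    then show False using dx X by simp
  qed
  have "take p xs = X1 @ bb # take (p - Suc (length X1)) X2" using X X1p
    by (simp add: take_append) (metis Suc_diff_Suc take_Suc_Cons)
  then have gX1: "g \<notin> set X1" "g \<noteq> bb" using g by auto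
  have gz: "g \<noteq> z" using g zY1 by auto
  have "g \<in> set xs" using g sxy ys_def by auto
  then have "g \<in> set X2'" using gX1 gz X X2' by auto
  then obtain C1 C2 where C: "X2' = C1 @ g # C2" by (metis split_list)
  have s1: "lstep (X1 @ bb # X2' @ [z], ys1) (X1 @ bb # z # X2', ys1)"
    by (rule lstep.t1) (auto simp: ys1_def)
  have "lstep\<^sup>*\<^sup>* (X1 @ bb # z # X2', ys1) (X1 @ bb # rotate (length (z # C1 @ [g])) (z # X2'), ys1)"
    by (rule rot1) (auto simp: ys1_def C)
  moreover have "rotate (length (z # C1 @ [g])) (z # X2') = C2 @ z # C1 @ [g]"
    using C rotate_append[of "z # C1 @ [g]" C2] by simp
  ultimately have r2: "lstep\<^sup>*\<^sup>* s0 (X1 @ bb # C2 @ z # C1 @ [g], ys1)"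
    using r1 s1 X X2' ys1_def
    by (metis (no_types, lifting) rtranclp.rtrancl_into_rtrancl rtranclp_trans)
  obtain D1 D2 where D: "Y1 = D1 @ g # D2" using g by (metis split_list)
  have "ys1 = D1 @ last (X1 @ bb # C2 @ z # C1 @ [g]) # (D2 @ z # U2 @ U1 @ [bb])"
    using D ys1_def by simp
  moreover have "length D1 < length Y1" using D by simp
  ultimately show ?thesis using r2 by metis
qed

lemma exists_std:
  assumes p0: "lperm s0" and i0: "lirr s0" and n2: "length (fst s0) \<ge> 2"
  shows "\<exists>s. lstep\<^sup>*\<^sup>* s0 s \<and> lstd s"
proof -
  define P where "P k \<longleftrightarrow> (\<exists>xs Y1 Y2. lstep\<^sup>*\<^sup>* s0 (xs, Y1 @ last xs # Y2) \<and> length Y1 = k)" for k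
  obtain xs0 ys0 where s0: "s0 = (xs0, ys0)" by fastforce
  have "xs0 \<noteq> []" using n2 s0 by auto
  then have "last xs0 \<in> set ys0" using p0 s0 unfolding lperm_def by auto
  then obtain Y1 Y2 where "ys0 = Y1 @ last xs0 # Y2" by (metis split_list)
  then have "P (length Y1)" unfolding P_def using s0 by blast
  then have PL: "P (LEAST k. P k)" by (rule LeastI)
  then obtain xs Y1 Y2 where r: "lstep\<^sup>*\<^sup>* s0 (xs, Y1 @ last xs # Y2)" and l: "length Y1 = (LEAST k. P k)"
    unfolding P_def by blast
  have pr: "lperm (xs, Y1 @ last xs # Y2)" and sx: "set xs = set xs0"
    using lsteps_perm[OF r p0] s0 by auto
  have lenx: "length xs = length xs0" using pr p0 s0 unfolding lperm_def
    by (metis distinct_card fst_conv sx)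
  then have xne: "xs \<noteq> []" using n2 s0 by auto
  have Y1e: "Y1 = []"
  proof (rule ccontr)
    assume "Y1 \<noteq> []"
    from step_down[OF r refl xne p0 i0 this] obtain xs' Y1' Y2' where
      "lstep\<^sup>*\<^sup>* s0 (xs', Y1' @ last xs' # Y2')" "length Y1' < length Y1" by blast
    then have "P (length Y1')" unfolding P_def by blast
    moreover have "length Y1' < (LEAST k. P k)" using l \<open>length Y1' < length Y1\<close> by simp
    ultimately
    show False using not_less_Least by blast
  qed
  obtain a xs' where xa: "xs = a # xs'" using xne by (cases xs) auto
  have xs'ne: "xs' \<noteq> []" using lenx n2 s0 xa by auto
  have dx: "distinct xs" using pr unfolding lperm_def by simp
  have az: "a \<noteq> last xs" using dx xa xs'ne by (metis distinct.simps(2) last_ConsR last_in_set)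
  have "a \<in> set (Y1 @ last xs # Y2)" using pr xa unfolding lperm_def by auto
  then have "a \<in> set Y2" using Y1e az by simp
  then obtain U1 U2 where U: "Y2 = U1 @ a # U2" by (metis split_list)
  have "lstep\<^sup>*\<^sup>* (xs, [] @ last xs # Y2) (xs, [] @ last xs # rotate (length (U1 @ [a])) Y2)"
    by (rule rot0) (use xne U in auto)
  moreover have "rotate (length (U1 @ [a])) Y2 = U2 @ U1 @ [a]"
    using U rotate_append[of "U1 @ [a]" U2] by simp
  ultimately have r2: "lstep\<^sup>*\<^sup>* s0 (xs, last xs # U2 @ U1 @ [a])" using r Y1e by simp
  have "xs = a # butlast xs' @ [last xs]" using xa xs'ne by simp
  then have "lstd (xs, last xs # U2 @ U1 @ [a])" unfolding lstd_def by (intro exI[of _ a] exI[of _ "last xs"] exI[of _ "butlast xs'"] exI[of _ "U2 @ U1"]) simp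
  then show ?thesis using r2 by blast
qed



definition red :: "'a list \<Rightarrow> 'a list \<Rightarrow> nat \<Rightarrow> bool" where
  "red T B l \<longleftrightarrow> 1 \<le> l \<and> l < length T \<and> set (take l T) = set (take l B)"

lemma descent:
  assumes dT: "distinct T" and dB: "distinct B" and sTB: "set T = set B"
    and T: "T = T1 @ bt # T2" and B: "B = bt # B1 @ x # rest"
    and T2ne: "T2 \<noteq> []" and x: "last T2 = x" and nd: "last T \<noteq> last B"
    and rL: "red T B L" and mx: "\<forall>l. red T B l \<longrightarrow> l \<le> L"
    and rl: "red (T2 @ T1 @ [bt]) (B1 @ x # bt # rest) l"
  shows "l < L"
proof (rule ccontr)
  assume "\<not> l < L"
  then have Ll: "L \<le> l" by simp
  define N where "N = length T"
  define T' where "T' = T2 @ T1 @ [bt]"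
  define B' where "B' = B1 @ x # bt # rest"
  define u where "u = length B1"
  have lenB: "length B = N" using dT dB sTB N_def by (metis distinct_card)
  have L1: "1 \<le> L" "L < N" and PL: "set (take L T) = set (take L B)" using rL N_def unfolding red_def by auto
  have l1: "1 \<le> l" "l < N" and Pl: "set (take l T') = set (take l B')"
    using rl T N_def T'_def B'_def unfolding red_def by auto
  have lastT: "last T = x" using T T2ne x by simp
  have dT': "bt \<notin> set T1" "bt \<notin> set T2" "set T1 \<inter> set T2 = {}" "distinct T2" "distinct T1"
    using dT T by auto
  have dB': "bt \<notin> set B1" "x \<notin> set B1" "bt \<noteq> x" "bt \<notin> set rest" "x \<notin> set rest"
     "set B1 \<inter> set rest = {}" "distinct B1" "distinct rest"
    using dB B by auto
  have xT2: "x \<in> set T2" using x T2ne by auto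
  have btL: "bt \<in> set (take L B)" using B L1 by (cases L) auto
  have jL: "length T1 < L"
  proof (rule ccontr)
    assume "\<not> length T1 < L"
    then have "take L T = take L T1" using T by simp
    then show False using btL PL dT'(1) by (metis in_set_takeD)
  qed
  have T1L: "set T1 \<union> {bt} \<subseteq> set (take L T)"
  proof -
    have "take L T = T1 @ bt # take (L - Suc (length T1)) T2" using T jL
      by (simp add: take_append) (metis Suc_diff_Suc take_Suc_Cons)
    then show ?thesis by auto
  qed
  have xnL: "x \<notin> set (take L T)" using last_notin_take[OF dT] L1 N_def lastT by auto
  have uL: "L \<le> Suc u"
  proof (rule ccontr)
    assume "\<not> L \<le> Suc u"
    define k where "k = L - Suc (Suc u)"
    have k: "L = Suc (Suc (u + k))" using \<open>\<not> L \<le> Suc u\<close> k_def by simp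
    have "take L B = bt # B1 @ x # take k rest" unfolding k B u_def by simp
    then have "x \<in> set (take L B)" by simp
    then show False using xnL PL by simp
  qed
  have lenB2: "N = Suc (Suc (u + length rest))" using lenB B u_def by simp
  show False
  proof (cases "Suc (Suc u) \<le> l")
    case True
    define k where "k = l - Suc (Suc u)"
    have k: "l = Suc (Suc (u + k))" using True k_def by simp
    have "take l B' = B1 @ x # bt # take k rest" unfolding k B'_def u_def by simp
    then have "bt \<in> set (take l B')" by simp
    moreover have "bt \<notin> set (take l T')"
    proof -
      have "length T' = N" using T T'_def N_def by simp
      then have "last T' \<notin> set (take l T')" using last_notin_take[of T' l] dT T T'_def l1 by auto
      then show ?thesis using T'_def by simp
    qed
    ultimately show False using Pl by simp
  next
    case False
    then have lu: "l \<le> Suc u" by simp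
    have PB: "set (take l B') = set (take l (B1 @ x # rest))"
    proof -
      have d: "l - length B1 = 0 \<or> l - length B1 = 1" using lu u_def by arith
      have "take l B' = take l (B1 @ [x])" using d B'_def by (auto simp: take_append)
      moreover have "take l (B1 @ x # rest) = take l (B1 @ [x])" using d by (auto simp: take_append)
      ultimately show ?thesis by simp
    qed
    show False
    proof (cases "l \<le> length T2")
      case True
      have PT: "take l T' = take l T2" using True T'_def by simp
      show False
      proof (cases T1)
        case (Cons t T1r)
        have "t \<in> set (take L B)" using PL T1L Cons by auto
        moreover have "t \<noteq> bt" using dT'(1) Cons by auto
        ultimately have "t \<in> set (take (L - 1) (B1 @ x # rest))" using B L1 by (cases L) auto
        then have "t \<in> set (take l (B1 @ x # rest))" using Ll
          by (meson diff_le_self in_mono le_trans set_take_subset_set_take)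
        then have "t \<in> set T2" using PB Pl PT by (metis in_set_takeD)
        then show False using dT'(3) Cons by auto
      next
        case Nil
        have "set (take (Suc l) T) = insert bt (set (take l T2))" using T Nil by simp
        also have "\<dots> = insert bt (set (take l (B1 @ x # rest)))" using PT Pl PB by simp
        also have "\<dots> = set (take (Suc l) B)" using B by simp
        finally have "red T B (Suc l) \<or> Suc l \<ge> N" unfolding red_def N_def by auto
        then have "Suc l \<ge> N" using mx Ll by fastforce
        then have "length rest = 0" using lu lenB2 by arith
        then have "rest = []" by simp
        then have "last B = x" using B by simp
        then show False using nd lastT by simp
      qed
    next
      case False
      then have "set T2 \<subseteq> set (take l T')" using T'_def by (simp add: take_append)
      then have xl: "x \<in> set (take l (B1 @ x # rest))" using xT2 Pl PB by auto
      have lu2: "l = Suc u"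
      proof (rule ccontr)
        assume "l \<noteq> Suc u"
        then have "l \<le> u" using lu by simp
        then have "take l (B1 @ x # rest) = take l B1" using u_def by simp
        then show False using xl dB'(2) by (metis in_set_takeD)
      qed
      have restE: "rest = []"
      proof (rule ccontr)
        assume "rest \<noteq> []"
        then obtain r where r: "r \<in> set rest" by (cases rest) auto
        have "r \<in> set T" using r sTB B by auto
        moreover have "r \<notin> set (take L B)"
        proof
          assume "r \<in> set (take L B)"
          moreover have "take L B = take L (bt # B1)" using uL B u_def
            take_append[of L "bt # B1" "x # rest"] by simp
          ultimately have "r \<in> set (bt # B1)" by (metis in_set_takeD)
          then show False using r dB' by auto
        qed
        then have "r \<notin> set T1" "r \<noteq> bt" using PL T1L by auto
        ultimately have "r \<in> set T2" using T by auto
        then have "r \<in> set (take l T')" using \<open>set T2 \<subseteq> set (take l T')\<close> by auto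
        then have "r \<in> set (take l (B1 @ x # rest))" using Pl PB by simp
        then have "r \<in> set (B1 @ [x])" using lu2 u_def by simp
        then show False using r dB' by auto
      qed
      then have "last B = x" using B by simp
      then show False using nd lastT by simp
    qed
  qed
qed



lemma phi_reach:
  assumes T: "T = T1 @ bt # T2" and T2ne: "T2 \<noteq> []" and x: "last T2 = x"
  shows "lstep\<^sup>*\<^sup>* (a # T @ [b], b # (bt # B1 @ x # rest) @ [a])
           (a # (T2 @ T1 @ [bt]) @ [b], b # (B1 @ x # bt # rest) @ [a])"
proof -
  have s1: "lstep\<^sup>*\<^sup>* (a # T @ [b], [] @ b # (bt # B1 @ x # rest @ [a]))
       (a # T @ [b], [] @ b # rotate 1 (bt # B1 @ x # rest @ [a]))"
    by (rule rot0) auto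
  have s2: "lstep ((a # T1) @ bt # T2 @ [b], b # B1 @ x # rest @ [a, bt])
                  ((a # T1) @ bt # b # T2, b # B1 @ x # rest @ [a, bt])"
    by (rule lstep.t1) auto
  have s3: "lstep ((a # T1) @ bt # b # T2, (b # B1) @ x # (rest @ [a]) @ [bt])
                  ((a # T1) @ bt # b # T2, (b # B1) @ x # bt # rest @ [a])"
    by (rule lstep.t0) (use T2ne x in auto)
  have s4: "lstep\<^sup>*\<^sup>* ([] @ a # (T1 @ bt # b # T2), (b # B1) @ x # bt # rest @ [a])
                  ([] @ a # rotate (length (T1 @ [bt, b])) (T1 @ bt # b # T2), (b # B1) @ x # bt # rest @ [a])"
    by (rule rot1) auto
  have rr: "rotate (length (T1 @ [bt, b])) (T1 @ bt # b # T2) = T2 @ T1 @ [bt, b]"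
    using rotate_append[of "T1 @ [bt, b]" T2] by simp
  show ?thesis
    using s1 s2 s3 s4 rr T
    by (simp del: rotate_append)
qed

definition lgood :: "'a list \<times> 'a list \<Rightarrow> bool" where
  "lgood S \<longleftrightarrow> (\<exists>a b T B. S = (a # T @ [b], b # B @ [a]) \<and> (\<forall>l. \<not> red T B l))"

definition ldeg :: "'a list \<times> 'a list \<Rightarrow> bool" where
  "ldeg S \<longleftrightarrow> (\<exists>a b T B. S = (a # T @ [b], b # B @ [a]) \<and> T \<noteq> [] \<and> last T = last B)"

lemma descent_main:
  assumes p0: "lperm S0"
  shows "lstep\<^sup>*\<^sup>* S0 (a # T @ [b], b # B @ [a]) \<Longrightarrow> (\<forall>l. red T B l \<longrightarrow> l < K)
     \<Longrightarrow> \<exists>S'. lstep\<^sup>*\<^sup>* S0 S' \<and> (lgood S' \<or> ldeg S')"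
proof (induction K arbitrary: T B rule: less_induct)
  case (less K)
  let ?S = "(a # T @ [b], b # B @ [a])"
  show ?case
  proof (cases "\<forall>l. \<not> red T B l")
    case True
    then have "lgood ?S" unfolding lgood_def by blast
    then show ?thesis using less.prems by blast
  next
    case False
    then obtain l0 where l0: "red T B l0" by blast
    show ?thesis
    proof (cases "last T = last B")
      case True
      have "T \<noteq> []" using l0 unfolding red_def by auto
      then have "ldeg ?S" using True unfolding ldeg_def by blast
      then show ?thesis using less.prems by blast
    next
      case nd: False
      have pS: "lperm ?S" using lsteps_perm[OF less.prems(1) p0] by simp
      then have dT: "distinct T" and dB: "distinct B" and sTB: "set T = set B"
        unfolding lperm_def by auto
      define R where "R = {l. red T B l}"
      have fR: "finite R" unfolding R_def red_def by (rule finite_subset[of _ "{..<length T}"]) auto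
      have neR: "R \<noteq> {}" using l0 R_def by auto
      define L where "L = Max R"
      have rL: "red T B L" using Max_in[OF fR neR] L_def R_def by simp
      have mx: "\<forall>l. red T B l \<longrightarrow> l \<le> L" using Max_ge[OF fR] L_def R_def by simp
      have LK: "L < K" using rL less.prems(2) by blast
      have L1: "1 \<le> L" "L < length T" and PL: "set (take L T) = set (take L B)"
        using rL unfolding red_def by auto
      have lenTB: "length T = length B" using dT dB sTB by (metis distinct_card)
      obtain bt B0 where B: "B = bt # B0" using L1 lenTB by (cases B) auto
      have "bt \<in> set (take L B)" using B L1 by (cases L) auto
      then have btT: "bt \<in> set (take L T)" using PL by simp
      then obtain T1 T2 where T: "T = T1 @ bt # T2" by (metis in_set_takeD split_list)
      have lnt: "last T \<notin> set (take L T)" using last_notin_take[OF dT L1(2)] .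
      have T2ne: "T2 \<noteq> []" using T btT lnt by auto
      define x where "x = last T2"
      have xl: "last T = x" using T T2ne x_def by simp
      have "T \<noteq> []" using T by simp
      then have "x \<in> set T" using xl by (metis last_in_set)
      then have "x \<in> set B" using sTB by simp
      moreover have "x \<noteq> bt" using btT lnt xl by auto
      ultimately have "x \<in> set B0" using B by simp
      then obtain B1 rest where B0: "B0 = B1 @ x # rest" by (metis split_list)
      have reach: "lstep\<^sup>*\<^sup>* S0 (a # (T2 @ T1 @ [bt]) @ [b], b # (B1 @ x # bt # rest) @ [a])"
        using less.prems(1) phi_reach[OF T T2ne x_def[symmetric], of a b B1 rest] B B0
        by (metis (no_types, lifting) rtranclp_trans)
      have "\<forall>l. red (T2 @ T1 @ [bt]) (B1 @ x # bt # rest) l \<longrightarrow> l < L"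
        using descent[OF dT dB sTB T _ T2ne x_def[symmetric] nd rL mx] B B0 by blast
      then show ?thesis using less.IH[OF LK reach] by blast
    qed
  qed
qed

lemma main_list:
  assumes p0: "lperm S0" and i0: "lirr S0" and n4: "length (fst S0) \<ge> 4"
  shows "\<exists>S. lstep\<^sup>*\<^sup>* S0 S \<and> (lgood S \<or> ldeg S)"
proof -
  obtain S where r: "lstep\<^sup>*\<^sup>* S0 S" and st: "lstd S" using exists_std[OF p0 i0] n4 by auto
  obtain a b T B where S: "S = (a # T @ [b], b # B @ [a])" using st unfolding lstd_def
    by (metis prod.collapse)
  have "\<forall>l. red T B l \<longrightarrow> l < length T" unfolding red_def by auto
  then show ?thesis using descent_main[OF p0] r S by blast
qed



definition RR :: "'a set \<Rightarrow> 'a rpair \<Rightarrow> 'a list \<times> 'a list \<Rightarrow> bool" where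
  "RR A q s \<longleftrightarrow> distinct (fst s) \<and> distinct (snd s) \<and> set (fst s) = A \<and> set (snd s) = A \<and>
     (\<forall>i<length (fst s). fst q (fst s ! i) = Suc i) \<and> (\<forall>i<length (snd s). snd q (snd s ! i) = Suc i)"

lemma RR_len: "RR A q s \<Longrightarrow> length (fst s) = card A \<and> length (snd s) = card A"
  unfolding RR_def by (metis distinct_card)

lemma RR_swap: "RR A (prod.swap q) (prod.swap s) = RR A q s"
  unfolding RR_def by auto

lemma rauzy_swap: "rauzy_move A True q = prod.swap (rauzy_move A False (prod.swap q))"
  unfolding rauzy_move_def comp_def by (simp add: Let_def)

lemma nth_shift:
  assumes "i < length (Y1 @ z # Y2 @ [w])"
  shows "(Y1 @ z # w # Y2) ! i = (if i \<le> length Y1 then (Y1 @ z # Y2 @ [w]) ! i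
      else if i = Suc (length Y1) then w else (Y1 @ z # Y2 @ [w]) ! (i - 1))"
  using assms
proof (induction Y1 arbitrary: i)
  case Nil
  then show ?case by (cases i; cases "i - 1") (auto simp: nth_append)
next
  case (Cons a Y1)
  then show ?case by (cases i) auto
qed

lemma sim0:
  assumes R: "RR A q (xs, Y1 @ z # Y2 @ [w])" and xne: "xs \<noteq> []" and zl: "last xs = z"
  shows "RR A (rauzy_move A False q) (xs, Y1 @ z # w # Y2)"
proof -
  define ys where "ys = Y1 @ z # Y2 @ [w]"
  define n where "n = card A"
  have lx: "length xs = n" and ly: "length ys = n" using RR_len[OF R] n_def ys_def by auto
  have dx: "distinct xs" and sx: "set xs = A" and fx: "\<forall>i<n. fst q (xs ! i) = Suc i"
    and dy: "distinct ys" and sy: "set ys = A" and fy: "\<forall>i<n. snd q (ys ! i) = Suc i"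
    using R lx ly unfolding RR_def ys_def by auto
  have zx: "z = xs ! (n - 1)" using zl xne lx by (simp add: last_conv_nth)
  have n1: "n \<ge> 1" using lx xne by (cases xs) auto
  have fz: "fst q z = n" using fx zx n1 by simp
  have the: "(THE z'. z' \<in> A \<and> fst q z' = n) = z"
  proof (rule the_equality)
    show "z \<in> A \<and> fst q z = n" using fz zl xne sx by auto
  next
    fix z' assume "z' \<in> A \<and> fst q z' = n"
    then obtain i where i: "i < n" "z' = xs ! i" using sx lx by (metis in_set_conv_nth)
    then have "Suc i = n" using fx \<open>z' \<in> A \<and> fst q z' = n\<close> by auto
    then have "i = n - 1" by simp
    then show "z' = z" using i zx by simp
  qed
  define p where "p = length Y1"
  have yz: "ys ! p = z" using ys_def p_def by simp
  have pn: "p < n" using ly ys_def p_def by simp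
  have sz: "snd q z = Suc p" using fy yz pn by auto
  have nb: "n = Suc (Suc (p + length Y2))" using ly ys_def p_def by simp
  define po' where "po' = (\<lambda>b. if snd q b \<le> snd q z then snd q b
                     else if snd q b < n then snd q b + 1
                     else snd q z + 1)"
  have the': "(THE z'. z' \<in> A \<and> comp q False z' = card A) = z" using the by (simp add: comp_def n_def)
  have rm: "rauzy_move A False q = (fst q, po')"
    unfolding rauzy_move_def Let_def the' unfolding comp_def po'_def n_def by simp
  have P2: "\<forall>i<n. po' ((Y1 @ z # w # Y2) ! i) = Suc i"
  proof (intro allI impI)
    fix i assume i: "i < n"
    have ns: "(Y1 @ z # w # Y2) ! i = (if i \<le> p then ys ! i
      else if i = Suc p then ys ! (n - 1) else ys ! (i - 1))"
      using nth_shift[of i Y1 z Y2 w] i ly ys_def p_def nb by (simp add: nth_append)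
    show "po' ((Y1 @ z # w # Y2) ! i) = Suc i"
    proof (cases "i \<le> p")
      case True
      then show ?thesis using ns fy i sz unfolding po'_def by auto
    next
      case False
      show ?thesis
      proof (cases "i = Suc p")
        case True
        have "snd q (ys ! (n - 1)) = Suc (n - 1)" using fy n1 by simp
        then have "snd q (ys ! (n - 1)) = n" using n1 by simp
        then show ?thesis using ns True sz nb unfolding po'_def by auto
      next
        case False2: False
        have "snd q (ys ! (i - 1)) = Suc (i - 1)" using fy i by simp
        then have "snd q (ys ! (i - 1)) = i" using False by simp
        then show ?thesis using ns False False2 sz i unfolding po'_def by auto
      qed
    qed
  qed
  have Q: "distinct (Y1 @ z # w # Y2)" "set (Y1 @ z # w # Y2) = A" "length (Y1 @ z # w # Y2) = n"
    using dy sy ly ys_def by auto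
  have P1: "\<forall>i<length xs. fst q (xs ! i) = Suc i" using fx lx by simp
  have P2': "\<forall>i<length (Y1 @ z # w # Y2). po' ((Y1 @ z # w # Y2) ! i) = Suc i" using P2 Q(3) by simp
  have F1: "fst (rauzy_move A False q) = fst q" and F2: "snd (rauzy_move A False q) = po'" using rm by simp_all
  show ?thesis unfolding RR_def fst_conv snd_conv F1 F2 using dx sx P1 P2' Q(1) Q(2) by blast
qed

lemma sim1:
  assumes R: "RR A q (X1 @ z # X2 @ [w], ys)" and yne: "ys \<noteq> []" and zl: "last ys = z"
  shows "RR A (rauzy_move A True q) (X1 @ z # w # X2, ys)"
proof -
  have "RR A (prod.swap q) (prod.swap (X1 @ z # X2 @ [w], ys))" using R by (simp only: RR_swap)
  then have "RR A (prod.swap q) (ys, X1 @ z # X2 @ [w])" by (simp only: swap_simp)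
  from sim0[OF this yne zl] have "RR A (rauzy_move A False (prod.swap q)) (ys, X1 @ z # w # X2)" .
  moreover have "rauzy_move A False (prod.swap q) = prod.swap (rauzy_move A True q)"
    using rauzy_swap[of A q] by (simp only: swap_swap)
  ultimately have "RR A (prod.swap (rauzy_move A True q)) (prod.swap (X1 @ z # w # X2, ys))"
    by (simp only: swap_simp)
  then show ?thesis by (simp only: RR_swap)
qed

lemma sim: "lstep s t \<Longrightarrow> RR A q s \<Longrightarrow> \<exists>e. RR A (rauzy_move A e q) t"
  by (induction rule: lstep.induct) (blast intro: sim0 sim1)+

lemma sims: "lstep\<^sup>*\<^sup>* s t \<Longrightarrow> RR A q s \<Longrightarrow> q \<in> rauzy_class A p \<Longrightarrow> \<exists>q'\<in>rauzy_class A p. RR A q' t"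
proof (induction rule: rtranclp_induct)
  case base
  then show ?case by blast
next
  case (step y z)
  then obtain q' where q': "q' \<in> rauzy_class A p" "RR A q' y" by blast
  then obtain e where "RR A (rauzy_move A e q') z" using sim[OF step(2)] by blast
  then show ?case using q' rauzy_class.step by blast
qed



lemma list_of_bij:
  assumes fin: "finite A" and bij: "bij_betw f A {1..card A}"
  shows "\<exists>xs. distinct xs \<and> set xs = A \<and> (\<forall>i<length xs. f (xs ! i) = Suc i)"
proof -
  define n where "n = card A"
  define xs where "xs = map (\<lambda>i. inv_into A f (Suc i)) [0..<n]"
  have bi: "bij_betw (inv_into A f) {1..n} A" using bij_betw_inv_into[OF bij] n_def by simp
  have im: "Suc ` {0..<n} = {1..n}" by (simp add: image_Suc_atLeastLessThan atLeastLessThanSuc_atLeastAtMost)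
  have "set xs = inv_into A f ` Suc ` {0..<n}" unfolding xs_def by (simp only: set_map set_upt image_image)
  moreover have sx0: "inv_into A f ` {1..n} = A" using bi unfolding bij_betw_def by blast
  ultimately have sx: "set xs = A" unfolding im by (rule trans)
  have "inj_on (\<lambda>i. inv_into A f (Suc i)) {0..<n}"
  proof (rule inj_onI)
    fix i j assume "i \<in> {0..<n}" "j \<in> {0..<n}" "inv_into A f (Suc i) = inv_into A f (Suc j)"
    moreover have "inj_on (inv_into A f) {1..n}" using bi by (rule bij_betw_imp_inj_on)
    ultimately have "Suc i = Suc j" by (auto dest: inj_onD)
    then show "i = j" by simp
  qed
  then have dx: "distinct xs" unfolding xs_def by (simp add: distinct_map)
  have "\<forall>i<length xs. f (xs ! i) = Suc i"
  proof (intro allI impI)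
    fix i assume "i < length xs"
    then have i: "i < n" unfolding xs_def by simp
    have "Suc i \<in> f ` A" using bij i n_def unfolding bij_betw_def by auto
    then show "f (xs ! i) = Suc i" unfolding xs_def using i by (simp add: f_inv_into_f)
  qed
  then show ?thesis using dx sx by blast
qed

lemma take_char:
  assumes d: "distinct L" and f: "\<forall>i<length L. f (L ! i) = Suc i + c"
  shows "{d \<in> set L. f d \<le> k + c} = set (take k L)"
proof (intro set_eqI iffI)
  fix d assume "d \<in> {d \<in> set L. f d \<le> k + c}"
  then obtain i where i: "i < length L" "d = L ! i" "f d \<le> k + c" by (auto simp: in_set_conv_nth)
  then have "i < k" using f by auto
  then show "d \<in> set (take k L)" using i by (auto simp: in_set_conv_nth)
next
  fix d assume "d \<in> set (take k L)"
  then obtain i where i: "i < length L" "i < k" "d = L ! i" by (auto simp: in_set_conv_nth)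
  then show "d \<in> {d \<in> set L. f d \<le> k + c}" using f by auto
qed

lemma RR_std:
  assumes R: "RR A q (a # T @ [b], b # B @ [a])"
  shows "standard A q" "\<forall>i<length T. fst q (T ! i) = Suc i + 1" "\<forall>i<length B. snd q (B ! i) = Suc i + 1"
    "length B = length T" "card A = length T + 2" "distinct T" "distinct B" "set T = set B"
    "{c\<in>A. fst q c \<noteq> 1 \<and> snd q c \<noteq> 1} = set T"
proof -
  let ?xs = "a # T @ [b]" and ?ys = "b # B @ [a]"
  have L: "length ?xs = card A" "length ?ys = card A" using RR_len[OF R] by auto
  have dx: "distinct ?xs" and dy: "distinct ?ys" and sx: "set ?xs = A" and sy: "set ?ys = A"
    and fx: "\<forall>i<length ?xs. fst q (?xs ! i) = Suc i" and fy: "\<forall>i<length ?ys. snd q (?ys ! i) = Suc i"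
    using R unfolding RR_def by auto
  show lB: "length B = length T" using L by simp
  show "card A = length T + 2" using L by simp
  have fa: "fst q a = 1" using fx by force
  have fb: "fst q b = card A" using fx[rule_format, of "Suc (length T)"] L by (simp add: nth_append)
  have sb: "snd q b = 1" using fy by force
  have sa: "snd q a = card A" using fy[rule_format, of "Suc (length B)"] L by (simp add: nth_append)
  show "standard A q" unfolding standard_def using fa fb sa sb sx by auto
  show fT: "\<forall>i<length T. fst q (T ! i) = Suc i + 1"
  proof (intro allI impI)
    fix i assume "i < length T"
    then show "fst q (T ! i) = Suc i + 1" using fx[rule_format, of "Suc i"] by (simp add: nth_append)
  qed
  show sB: "\<forall>i<length B. snd q (B ! i) = Suc i + 1"
  proof (intro allI impI)
    fix i assume "i < length B"
    then show "snd q (B ! i) = Suc i + 1" using fy[rule_format, of "Suc i"] by (simp add: nth_append)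
  qed
  show dT: "distinct T" "distinct B" using dx dy by auto
  show sTB: "set T = set B" using dx dy sx sy by auto
  show "{c\<in>A. fst q c \<noteq> 1 \<and> snd q c \<noteq> 1} = set T"
  proof (intro set_eqI iffI)
    fix c assume c: "c \<in> {c\<in>A. fst q c \<noteq> 1 \<and> snd q c \<noteq> 1}"
    then have "c \<noteq> a" "c \<noteq> b" using fa sb by auto
    then show "c \<in> set T" using c sx by auto
  next
    fix c assume c: "c \<in> set T"
    then obtain i where i: "i < length T" "c = T ! i" by (auto simp: in_set_conv_nth)
    have "c \<in> set B" using c sTB by simp
    then obtain j where j: "j < length B" "c = B ! j" by (auto simp: in_set_conv_nth)
    show "c \<in> {c\<in>A. fst q c \<noteq> 1 \<and> snd q c \<noteq> 1}"
      using fT i sB j c sx by auto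
  qed
qed

lemma RR_good:
  assumes R: "RR A q S" and g: "lgood S"
  shows "good A q"
proof -
  obtain a b T B where S: "S = (a # T @ [b], b # B @ [a])" and nr: "\<forall>l. \<not> red T B l"
    using g unfolding lgood_def by blast
  note F = RR_std[OF R[unfolded S]]
  define A' where "A' = {a\<in>A. fst q a \<noteq> 1 \<and> snd q a \<noteq> 1}"
  have A': "A' = set T" using F(9) A'_def by simp
  define r where "r = restrict_pair A' q"
  have r1: "\<forall>i<length T. fst r (T ! i) = Suc i + 0"
  proof (intro allI impI)
    fix i assume i: "i < length T"
    have "fst r (T ! i) = card {c\<in>set T. fst q c \<le> Suc i + 1}"
      unfolding r_def restrict_pair_def A' using F(2) i by simp
    also have "\<dots> = card (set (take (Suc i) T))" using take_char[OF F(6) F(2)] by simp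
    also have "\<dots> = Suc i" using F(6) i by (simp add: distinct_card)
    finally show "fst r (T ! i) = Suc i + 0" by simp
  qed
  have r2: "\<forall>i<length B. snd r (B ! i) = Suc i + 0"
  proof (intro allI impI)
    fix i assume i: "i < length B"
    have "snd r (B ! i) = card {c\<in>set B. snd q c \<le> Suc i + 1}"
      unfolding r_def restrict_pair_def A' using F(3) F(8) i by simp
    also have "\<dots> = card (set (take (Suc i) B))" using take_char[OF F(7) F(3)] by simp
    also have "\<dots> = Suc i" using F(7) i by (simp add: distinct_card)
    finally show "snd r (B ! i) = Suc i + 0" by simp
  qed
  have "irreducible A' r"
    unfolding irreducible_def
  proof (intro allI impI)
    fix k assume k: "1 \<le> k \<and> k < card A'"
    have c: "card A' = length T" using A' F(6) by (simp add: distinct_card)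
    have e1: "{a\<in>A'. fst r a \<le> k} = set (take k T)" using take_char[OF F(6) r1, of k] A' by simp
    have e2: "{a\<in>A'. snd r a \<le> k} = set (take k B)" using take_char[OF F(7) r2, of k] A' F(8) by simp
    show "{a\<in>A'. fst r a \<le> k} \<noteq> {a\<in>A'. snd r a \<le> k}"
      using nr k c e1 e2 unfolding red_def by auto
  qed
  then show ?thesis unfolding good_def Let_def using F(1) A'_def r_def by simp
qed

lemma RR_deg:
  assumes R: "RR A q S" and g: "ldeg S"
  shows "degenerate_star A q"
proof -
  obtain a b T B where S: "S = (a # T @ [b], b # B @ [a])" and ne: "T \<noteq> []" and l: "last T = last B"
    using g unfolding ldeg_def by blast
  note F = RR_std[OF R[unfolded S]]
  define c where "c = last T"
  have "c = T ! (length T - 1)" using ne c_def by (simp add: last_conv_nth)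
  then have "fst q c = card A - 1" using F(2) F(5) ne by simp
  moreover have "B \<noteq> []" using ne F(4) by auto
  then have "c = B ! (length B - 1)" using l c_def by (simp add: last_conv_nth)
  then have "snd q c = card A - 1" using F(3) F(4) F(5) ne by simp
  moreover have "c \<in> A" using R S ne c_def unfolding RR_def by auto
  ultimately show ?thesis unfolding degenerate_star_def using F(1) by blast
qed

theorem proposition6p3:
  fixes A :: "'a set" and p :: "'a rpair"
  assumes "finite A" and "card A \<ge> 4"
    and "is_pair A p" and "irreducible A p"
  shows "\<exists>q\<in>rauzy_class A p. good A q \<or> degenerate_star A q"
proof -
  obtain xs where xs: "distinct xs" "set xs = A" "\<forall>i<length xs. fst p (xs ! i) = Suc i"
    using list_of_bij[OF assms(1)] assms(3) unfolding is_pair_def by blast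
  obtain ys where ys: "distinct ys" "set ys = A" "\<forall>i<length ys. snd p (ys ! i) = Suc i"
    using list_of_bij[OF assms(1)] assms(3) unfolding is_pair_def by blast
  have R: "RR A p (xs, ys)" unfolding RR_def using xs ys by simp
  have lx: "length xs = card A" using RR_len[OF R] by simp
  have lp: "lperm (xs, ys)" unfolding lperm_def using xs ys by simp
  have li: "lirr (xs, ys)" unfolding lirr_def
  proof (intro allI impI)
    fix k assume k: "1 \<le> k \<and> k < length (fst (xs, ys))"
    have e1: "{a\<in>A. fst p a \<le> k} = set (take k xs)" using take_char[OF xs(1), of "fst p" 0 k] xs(2,3) by simp
    have e2: "{a\<in>A. snd p a \<le> k} = set (take k ys)" using take_char[OF ys(1), of "snd p" 0 k] ys(2,3) by simp
    have "{a\<in>A. fst p a \<le> k} \<noteq> {a\<in>A. snd p a \<le> k}"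
      using assms(4) k lx unfolding irreducible_def by auto
    then show "set (take k (fst (xs, ys))) \<noteq> set (take k (snd (xs, ys)))"
      unfolding e1 e2 by simp
  qed
  obtain S where S: "lstep\<^sup>*\<^sup>* (xs, ys) S" "lgood S \<or> ldeg S"
    using main_list[OF lp li] lx assms(2) by auto
  obtain q where q: "q \<in> rauzy_class A p" "RR A q S"
    using sims[OF S(1) R rauzy_class.base] by blast
  show ?thesis using S(2) q RR_good RR_deg by blast
qed

end
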